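(* Consider MDVI$(\alpha,K,M)$ with any $\alpha\in[0,1)$ and any positive integers $K,M$, on an MDP as in the context. Then, for every realization of the samples and every $k\in\{1,\dots,K\}$, $$0 \leq v^* - v^{\pi'_k} \leq \Gamma_k,\qquad \Gamma_k := \frac{1}{A_\infty}\sum_{j=0}^{k-1}\gamma^j\left(\pi_k P_{k-j}^{k-1} - \pi_* P_*^j\right)E_{k-j} + 2H\left(\alpha^k + \frac{A_{\gamma,k}}{A_\infty}\right)\mathbf{1},$$ where inequalities between vectors are componentwise.
   Context: MDP: finite state set $\mathcal{X}$, finite action set $\mathcal{A}$, discount $\gamma\in[0,1)$, reward $r \in [-1,1]^{\mathcal{X}\times\mathcal{A}}$, transition kernel $P(y|x,a)$, $H=1/(1-\gamma)$. $P$ is viewed as a matrix in $\mathbb{R}^{(\mathcal{X}\times\mathcal{A})\times\mathcal{X}}$, $(Pv)(x,a)=\sum_yP(y|x,a)v(y)$; a policy $\pi$ is viewed as a matrix in $\mathbb{R}^{\mathcal{X}\times(\mathcal{X}\times\mathcal{A})}$, $(\pi q)(x)=\sum_a\pi(a|x)q(x,a)$; $P^\pi := P\pi$; $T^\pi q = r+\gamma P^\pi q$; $q^\pi$ its fixed point, $v^\pi=\pi q^\pi$; $\pi_*$ is an optimal policy, $v^*=v^{\pi_*}$. $\mathbf{1}$ is the all-ones vector. MDVI$(\alpha,K,M)$: $s_0 = 0$, $w_0=w_{-1}=0$; for $k=0,\dots,K-1$: $v_k = w_k-\alpha w_{k-1}$; for each $(x,a)$, independent samples $y_{k,m,x,a}\sim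 P(\cdot|x,a)$, $m\in[M]$; $q_{k+1}(x,a) = r(x,a)+\frac{\gamma}{M}\sum_m v_k(y_{k,m,x,a})$; $s_{k+1}=q_{k+1}+\alpha s_k$; $w_{k+1}(x)=\max_a s_{k+1}(x,a)$. $\pi_k$ ($k=0,\dots,K$) is a deterministic greedy policy w.r.t. $s_k$. Notation: $\widehat P_k v(x,a) = \frac1M\sum_m v(y_{k,m,x,a})$; $\varepsilon_k = \gamma\widehat P_{k-1}v_{k-1} - \gamma P v_{k-1}$ for $k\in[K]$; $E_k = \sum_{j=1}^k \alpha^{k-j}\varepsilon_j$. $A_\infty = 1/(1-\alpha)$, $A_{\gamma,k} = \sum_{j=0}^{k-1}\gamma^{k-j}\alpha^j$. For $i\ge j$, $P_j^i := P^{\pi_i}P^{\pi_{i-1}}\cdots P^{\pi_j}$, and $P_j^i := I$ if $i<j$; $P_*^j := (P^{\pi_*})^j$. $\pi'_k$ is the non-stationary policy following $\pi_{k-t}$ at time step $t\le k$ and $\pi_0$ afterwards, with value $v^{\pi'_k} = \pi_kT^{\pi_{k-1}}\cdots T^{\pi_1}q^{\pi_0}$. *)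

theory Defs
  imports Main "HOL-Analysis.Analysis"
begin

text \<open>Transition kernel: P x a y = P(y|x,a). Stochastic policies: pol x a = pol(a|x).\<close>

definition stoch_kernel :: "('x::finite \<Rightarrow> 'a::finite \<Rightarrow> 'x \<Rightarrow> real) \<Rightarrow> bool" where
  "stoch_kernel P \<longleftrightarrow> (\<forall>x a y. 0 \<le> P x a y) \<and> (\<forall>x a. (\<Sum>y\<in>UNIV. P x a y) = 1)"

definition stoch_policy :: "('x::finite \<Rightarrow> 'a::finite \<Rightarrow> real) \<Rightarrow> bool" where
  "stoch_policy \<pi> \<longleftrightarrow> (\<forall>x a. 0 \<le> \<pi> x a) \<and> (\<forall>x. (\<Sum>a\<in>UNIV. \<pi> x a) = 1)"

definition det_pol :: "('x \<Rightarrow> 'a) \<Rightarrow> 'x \<Rightarrow> 'a \<Rightarrow> real" where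
  "det_pol d x a = (if a = d x then 1 else 0)"

definition pol_app :: "('x \<Rightarrow> 'a::finite \<Rightarrow> real) \<Rightarrow> ('x \<Rightarrow> 'a \<Rightarrow> real) \<Rightarrow> 'x \<Rightarrow> real" where
  "pol_app \<pi> q x = (\<Sum>a\<in>UNIV. \<pi> x a * q x a)"

definition kern_app :: "('x \<Rightarrow> 'a \<Rightarrow> 'x::finite \<Rightarrow> real) \<Rightarrow> ('x \<Rightarrow> real) \<Rightarrow> 'x \<Rightarrow> 'a \<Rightarrow> real" where
  "kern_app P v x a = (\<Sum>y\<in>UNIV. P x a y * v y)"

definition Ppol :: "('x \<Rightarrow> 'a \<Rightarrow> 'x::finite \<Rightarrow> real) \<Rightarrow> ('x \<Rightarrow> 'a::finite \<Rightarrow> real)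
    \<Rightarrow> ('x \<Rightarrow> 'a \<Rightarrow> real) \<Rightarrow> 'x \<Rightarrow> 'a \<Rightarrow> real" where
  "Ppol P \<pi> q = kern_app P (pol_app \<pi> q)"

definition Tpol :: "real \<Rightarrow> ('x \<Rightarrow> 'a \<Rightarrow> real) \<Rightarrow> ('x \<Rightarrow> 'a \<Rightarrow> 'x::finite \<Rightarrow> real)
    \<Rightarrow> ('x \<Rightarrow> 'a::finite \<Rightarrow> real) \<Rightarrow> ('x \<Rightarrow> 'a \<Rightarrow> real) \<Rightarrow> 'x \<Rightarrow> 'a \<Rightarrow> real" where
  "Tpol \<gamma> r P \<pi> q x a = r x a + \<gamma> * Ppol P \<pi> q x a"

definition qpi :: "real \<Rightarrow> ('x \<Rightarrow> 'a \<Rightarrow> real) \<Rightarrow> ('x \<Rightarrow> 'a \<Rightarrow> 'x::finite \<Rightarrow> real)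
    \<Rightarrow> ('x \<Rightarrow> 'a::finite \<Rightarrow> real) \<Rightarrow> 'x \<Rightarrow> 'a \<Rightarrow> real" where
  "qpi \<gamma> r P \<pi> = (THE q. Tpol \<gamma> r P \<pi> q = q)"

definition vpi :: "real \<Rightarrow> ('x \<Rightarrow> 'a \<Rightarrow> real) \<Rightarrow> ('x \<Rightarrow> 'a \<Rightarrow> 'x::finite \<Rightarrow> real)
    \<Rightarrow> ('x \<Rightarrow> 'a::finite \<Rightarrow> real) \<Rightarrow> 'x \<Rightarrow> real" where
  "vpi \<gamma> r P \<pi> = pol_app \<pi> (qpi \<gamma> r P \<pi>)"

definition optimal_policy :: "real \<Rightarrow> ('x \<Rightarrow> 'a \<Rightarrow> real) \<Rightarrow> ('x \<Rightarrow> 'a \<Rightarrow> 'x::finite \<Rightarrow> real)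
    \<Rightarrow> ('x \<Rightarrow> 'a::finite \<Rightarrow> real) \<Rightarrow> bool" where
  "optimal_policy \<gamma> r P \<pi>s \<longleftrightarrow> stoch_policy \<pi>s \<and>
     (\<forall>\<pi>. stoch_policy \<pi> \<longrightarrow> (\<forall>x. vpi \<gamma> r P \<pi> x \<le> vpi \<gamma> r P \<pi>s x))"

text \<open>MDVI iteration. Samples: y k m x a = y_{k,m,x,a}, m ranges over {0..<M}.
  mdvi_state k = (s_k, w_k, w_{k-1}) with w_{-1} = 0.\<close>
primrec mdvi_state :: "real \<Rightarrow> nat \<Rightarrow> real \<Rightarrow> ('x \<Rightarrow> 'a \<Rightarrow> real)
    \<Rightarrow> (nat \<Rightarrow> nat \<Rightarrow> 'x \<Rightarrow> 'a \<Rightarrow> 'x) \<Rightarrow> nat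
    \<Rightarrow> ('x \<Rightarrow> 'a::finite \<Rightarrow> real) \<times> ('x \<Rightarrow> real) \<times> ('x \<Rightarrow> real)" where
  "mdvi_state \<alpha> M \<gamma> r y 0 = ((\<lambda>x a. 0), (\<lambda>x. 0), (\<lambda>x. 0))"
| "mdvi_state \<alpha> M \<gamma> r y (Suc k) =
     (case mdvi_state \<alpha> M \<gamma> r y k of (s, w, wp) \<Rightarrow>
        let v = (\<lambda>x. w x - \<alpha> * wp x);
            q = (\<lambda>x a. r x a + \<gamma> / real M * (\<Sum>m<M. v (y k m x a)));
            s' = (\<lambda>x a. q x a + \<alpha> * s x a);
            w' = (\<lambda>x. Max (range (s' x)))
        in (s', w', w))"

definition mdvi_s where "mdvi_s \<alpha> M \<gamma> r y k = fst (mdvi_state \<alpha> M \<gamma> r y k)"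

definition mdvi_v where
  "mdvi_v \<alpha> M \<gamma> r y k = (\<lambda>x. fst (snd (mdvi_state \<alpha> M \<gamma> r y k)) x
                              - \<alpha> * snd (snd (mdvi_state \<alpha> M \<gamma> r y k)) x)"

definition Phat :: "nat \<Rightarrow> (nat \<Rightarrow> nat \<Rightarrow> 'x \<Rightarrow> 'a \<Rightarrow> 'x) \<Rightarrow> nat \<Rightarrow> ('x \<Rightarrow> real) \<Rightarrow> 'x \<Rightarrow> 'a \<Rightarrow> real" where
  "Phat M y k v x a = (\<Sum>m<M. v (y k m x a)) / real M"

text \<open>\<epsilon>_k = \<gamma> \<widehat>P_{k-1} v_{k-1} - \<gamma> P v_{k-1} (used for k \<ge> 1)\<close>
definition mdvi_eps where
  "mdvi_eps \<alpha> M \<gamma> r P y k = (\<lambda>x a.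
      \<gamma> * Phat M y (k - 1) (mdvi_v \<alpha> M \<gamma> r y (k - 1)) x a
    - \<gamma> * kern_app P (mdvi_v \<alpha> M \<gamma> r y (k - 1)) x a)"

definition mdvi_E where
  "mdvi_E \<alpha> M \<gamma> r P y k = (\<lambda>x a. \<Sum>j\<in>{1..k}. \<alpha> ^ (k - j) * mdvi_eps \<alpha> M \<gamma> r P y j x a)"

text \<open>Pchain P pol j n = P^{\<pi>_{j+n-1}} \<dots> P^{\<pi>_j} (n factors). Thus P_j^i = Pchain P pol j (i + 1 - j),
  which is the identity when i < j.\<close>
primrec Pchain :: "('x \<Rightarrow> 'a \<Rightarrow> 'x::finite \<Rightarrow> real) \<Rightarrow> (nat \<Rightarrow> 'x \<Rightarrow> 'a::finite) \<Rightarrow> nat \<Rightarrow> nat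
    \<Rightarrow> ('x \<Rightarrow> 'a \<Rightarrow> real) \<Rightarrow> 'x \<Rightarrow> 'a \<Rightarrow> real" where
  "Pchain P pol j 0 q = q"
| "Pchain P pol j (Suc n) q = Ppol P (det_pol (pol (j + n))) (Pchain P pol j n q)"

definition Pji where "Pji P pol j i = Pchain P pol j (i + 1 - j)"

definition Pstar_pow where "Pstar_pow P \<pi>s j = (Ppol P \<pi>s ^^ j)"

primrec Tchain :: "real \<Rightarrow> ('x \<Rightarrow> 'a \<Rightarrow> real) \<Rightarrow> ('x \<Rightarrow> 'a \<Rightarrow> 'x::finite \<Rightarrow> real)
    \<Rightarrow> (nat \<Rightarrow> 'x \<Rightarrow> 'a::finite) \<Rightarrow> nat \<Rightarrow> ('x \<Rightarrow> 'a \<Rightarrow> real) \<Rightarrow> 'x \<Rightarrow> 'a \<Rightarrow> real" where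
  "Tchain \<gamma> r P pol 0 q = q"
| "Tchain \<gamma> r P pol (Suc n) q = Tpol \<gamma> r P (det_pol (pol (Suc n))) (Tchain \<gamma> r P pol n q)"

text \<open>v^{\<pi>'_k} = \<pi>_k T^{\<pi>_{k-1}} \<dots> T^{\<pi>_1} q^{\<pi>_0}  (k \<ge> 1)\<close>
definition v_nonstat where
  "v_nonstat \<gamma> r P pol k =
     pol_app (det_pol (pol k)) (Tchain \<gamma> r P pol (k - 1) (qpi \<gamma> r P (det_pol (pol 0))))"

definition A_inf :: "real \<Rightarrow> real" where "A_inf \<alpha> = 1 / (1 - \<alpha>)"

definition A_gamma :: "real \<Rightarrow> real \<Rightarrow> nat \<Rightarrow> real" where
  "A_gamma \<gamma> \<alpha> k = (\<Sum>j<k. \<gamma> ^ (k - j) * \<alpha> ^ j)"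

definition Hor :: "real \<Rightarrow> real" where "Hor \<gamma> = 1 / (1 - \<gamma>)"

definition Gamma_bound where
  "Gamma_bound \<alpha> M \<gamma> r P y pol \<pi>s k = (\<lambda>x.
     (1 / A_inf \<alpha>) * (\<Sum>j<k. \<gamma> ^ j *
        ( pol_app (det_pol (pol k)) (Pji P pol (k - j) (k - 1) (mdvi_E \<alpha> M \<gamma> r P y (k - j))) x
        - pol_app \<pi>s (Pstar_pow P \<pi>s j (mdvi_E \<alpha> M \<gamma> r P y (k - j))) x))
     + 2 * Hor \<gamma> * (\<alpha> ^ k + A_gamma \<gamma> \<alpha> k / A_inf \<alpha>))"

end

theory Submission
  imports Defs
begin


lemma pol_app_add: "pol_app \<pi> (\<lambda>x a. f x a + g x a) x = pol_app \<pi> f x + pol_app \<pi> g x"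
  by (simp add: pol_app_def distrib_left sum.distrib)
lemma pol_app_diff: "pol_app \<pi> (\<lambda>x a. f x a - g x a) x = pol_app \<pi> f x - pol_app \<pi> g x"
  by (simp add: pol_app_def right_diff_distrib sum_subtractf)
lemma pol_app_cmult: "pol_app \<pi> (\<lambda>x a. c * f x a) x = c * pol_app \<pi> f x"
  by (simp add: pol_app_def sum_distrib_left algebra_simps)
lemma pol_app_sum: "pol_app \<pi> (\<lambda>x a. \<Sum>j\<in>S. f j x a) x = (\<Sum>j\<in>S. pol_app \<pi> (f j) x)"
  by (simp add: pol_app_def sum_distrib_left sum.swap[of _ S])
lemma pol_app_const: "stoch_policy \<pi> \<Longrightarrow> pol_app \<pi> (\<lambda>x a. c) x = c"
  by (simp add: pol_app_def stoch_policy_def flip: sum_distrib_right)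
lemma pol_app_mono: "stoch_policy \<pi> \<Longrightarrow> (\<And>a. f x a \<le> g x a) \<Longrightarrow> pol_app \<pi> f x \<le> pol_app \<pi> g x"
  unfolding pol_app_def stoch_policy_def by (intro sum_mono mult_left_mono) auto
lemma pol_app_le_max: "stoch_policy \<pi> \<Longrightarrow> (\<And>a. f x a \<le> c) \<Longrightarrow> pol_app \<pi> f x \<le> c"
  using pol_app_mono[where \<pi>=\<pi> and x=x and f=f and g="\<lambda>x a. c"] pol_app_const by metis
lemma pol_app_ge_min: "stoch_policy \<pi> \<Longrightarrow> (\<And>a. c \<le> f x a) \<Longrightarrow> c \<le> pol_app \<pi> f x"
  using pol_app_mono[where \<pi>=\<pi> and x=x and g=f and f="\<lambda>x a. c"] pol_app_const by metis

lemma det_pol_stoch: "stoch_policy (det_pol (g::'x::finite \<Rightarrow> 'a::finite))"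
  unfolding stoch_policy_def det_pol_def by simp
lemma pol_app_det: "pol_app (det_pol g) q x = q x (g x)"
proof -
  have "pol_app (det_pol g) q x = (\<Sum>a\<in>UNIV. if a = g x then q x a else 0)"
    unfolding pol_app_def det_pol_def by (rule sum.cong) auto
  thus ?thesis by simp
qed

lemma kern_app_add: "kern_app P (\<lambda>x. f x + g x) x a = kern_app P f x a + kern_app P g x a"
  by (simp add: kern_app_def distrib_left sum.distrib)
lemma kern_app_diff: "kern_app P (\<lambda>x. f x - g x) x a = kern_app P f x a - kern_app P g x a"
  by (simp add: kern_app_def right_diff_distrib sum_subtractf)
lemma kern_app_cmult: "kern_app P (\<lambda>x. c * f x) x a = c * kern_app P f x a"
  by (simp add: kern_app_def sum_distrib_left algebra_simps)
lemma kern_app_sum: "kern_app P (\<lambda>x. \<Sum>j\<in>S. f j x) x a = (\<Sum>j\<in>S. kern_app P (f j) x a)"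
  by (simp add: kern_app_def sum_distrib_left sum.swap[of _ S])
lemma kern_app_const: "stoch_kernel P \<Longrightarrow> kern_app P (\<lambda>x. c) x a = c"
  by (simp add: kern_app_def stoch_kernel_def flip: sum_distrib_right)
lemma kern_app_mono: "stoch_kernel P \<Longrightarrow> (\<And>y. f y \<le> g y) \<Longrightarrow> kern_app P f x a \<le> kern_app P g x a"
  unfolding kern_app_def stoch_kernel_def by (intro sum_mono mult_left_mono) auto

lemma Ppol_add: "Ppol P \<pi> (\<lambda>x a. f x a + g x a) x a = Ppol P \<pi> f x a + Ppol P \<pi> g x a"
proof -
  have "pol_app \<pi> (\<lambda>x a. f x a + g x a) = (\<lambda>x. pol_app \<pi> f x + pol_app \<pi> g x)"
    by (rule ext) (rule pol_app_add)
  thus ?thesis unfolding Ppol_def by (simp add: kern_app_add)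
qed
lemma Ppol_diff: "Ppol P \<pi> (\<lambda>x a. f x a - g x a) x a = Ppol P \<pi> f x a - Ppol P \<pi> g x a"
proof -
  have "pol_app \<pi> (\<lambda>x a. f x a - g x a) = (\<lambda>x. pol_app \<pi> f x - pol_app \<pi> g x)"
    by (rule ext) (rule pol_app_diff)
  thus ?thesis unfolding Ppol_def by (simp add: kern_app_diff)
qed
lemma Ppol_cmult: "Ppol P \<pi> (\<lambda>x a. c * f x a) x a = c * Ppol P \<pi> f x a"
proof -
  have "pol_app \<pi> (\<lambda>x a. c * f x a) = (\<lambda>x. c * pol_app \<pi> f x)"
    by (rule ext) (rule pol_app_cmult)
  thus ?thesis unfolding Ppol_def by (simp add: kern_app_cmult)
qed
lemma Ppol_sum: "Ppol P \<pi> (\<lambda>x a. \<Sum>j\<in>S. f j x a) x a = (\<Sum>j\<in>S. Ppol P \<pi> (f j) x a)"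
proof -
  have "pol_app \<pi> (\<lambda>x a. \<Sum>j\<in>S. f j x a) = (\<lambda>x. \<Sum>j\<in>S. pol_app \<pi> (f j) x)"
    by (rule ext) (rule pol_app_sum)
  thus ?thesis unfolding Ppol_def by (simp add: kern_app_sum)
qed
lemma Ppol_const: "stoch_kernel P \<Longrightarrow> stoch_policy \<pi> \<Longrightarrow> Ppol P \<pi> (\<lambda>x a. c) x a = c"
proof -
  assume a: "stoch_kernel P" "stoch_policy \<pi>"
  have "pol_app \<pi> (\<lambda>x a. c) = (\<lambda>x. c)" by (rule ext) (rule pol_app_const[OF a(2)])
  thus ?thesis unfolding Ppol_def by (simp add: kern_app_const a)
qed
lemma Ppol_mono: "stoch_kernel P \<Longrightarrow> stoch_policy \<pi> \<Longrightarrow> (\<And>x a. f x a \<le> g x a) \<Longrightarrow> Ppol P \<pi> f x a \<le> Ppol P \<pi> g x a"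
  unfolding Ppol_def by (intro kern_app_mono pol_app_mono) auto

lemma nonneg_lemma:
  fixes d :: "'x::finite \<Rightarrow> 'a::finite \<Rightarrow> real"
  assumes P: "stoch_kernel P" and pi: "stoch_policy \<pi>" and g: "0 \<le> \<gamma>" "\<gamma> < 1"
    and h: "\<And>x a. \<gamma> * Ppol P \<pi> d x a \<le> d x a"
  shows "0 \<le> d x a"
proof -
  define m where "m = Min (range (\<lambda>p. d (fst p) (snd p)))"
  have fin: "finite (range (\<lambda>p. d (fst p) (snd p)))" by simp
  have mle: "m \<le> d x a" for x a
  proof -
    have "d x a \<in> range (\<lambda>p. d (fst p) (snd p))" by (rule range_eqI[of _ _ "(x,a)"]) simp
    thus ?thesis unfolding m_def using Min_le[OF fin] by blast
  qed
  have "m \<in> range (\<lambda>p. d (fst p) (snd p))" unfolding m_def by (rule Min_in[OF fin]) simp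
  then obtain p where p: "m = d (fst p) (snd p)" by blast
  have "Ppol P \<pi> (\<lambda>x a. m) (fst p) (snd p) \<le> Ppol P \<pi> d (fst p) (snd p)"
    by (rule Ppol_mono[OF P pi]) (rule mle)
  hence "m \<le> Ppol P \<pi> d (fst p) (snd p)" by (simp add: Ppol_const[OF P pi])
  hence "\<gamma> * m \<le> \<gamma> * Ppol P \<pi> d (fst p) (snd p)" using g by (simp add: mult_left_mono)
  also have "\<dots> \<le> m" using h p by simp
  finally have "0 \<le> (1 - \<gamma>) * m" by (simp add: algebra_simps)
  hence "0 \<le> m" using g by (simp add: zero_le_mult_iff)
  thus ?thesis using mle order.trans by blast
qed



lemma fp_exists:
  fixes P :: "'x::finite \<Rightarrow> 'a::finite \<Rightarrow> 'x \<Rightarrow> real"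
  assumes P: "stoch_kernel P" and pi: "stoch_policy \<pi>" and g: "0 \<le> \<gamma>" "\<gamma> < 1"
  shows "\<exists>q. Tpol \<gamma> r P \<pi> q = q"
proof -
  define L where "L = (\<lambda>v::real^('x\<times>'a). \<chi> p. v$p - \<gamma> * Ppol P \<pi> (\<lambda>x a. v$(x,a)) (fst p) (snd p))"
  have lin: "linear L"
    by (rule linearI) (simp_all add: L_def vec_eq_iff Ppol_add Ppol_cmult algebra_simps)
  have ge: "v$p \<le> u$p" if "L u = L v" for u v p
  proof -
    define d where "d = (\<lambda>x a. u$(x,a) - v$(x,a))"
    have "\<gamma> * Ppol P \<pi> d x a \<le> d x a" for x a
    proof -
      have "(L u)$(x,a) = (L v)$(x,a)" using that by simp
      hence "u$(x,a) - \<gamma> * Ppol P \<pi> (\<lambda>x a. u$(x,a)) x a = v$(x,a) - \<gamma> * Ppol P \<pi> (\<lambda>x a. v$(x,a)) x a"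
        by (simp add: L_def)
      thus ?thesis unfolding d_def by (simp add: Ppol_diff algebra_simps)
    qed
    hence "0 \<le> d (fst p) (snd p)" by (rule nonneg_lemma[OF P pi g])
    thus ?thesis by (simp add: d_def)
  qed
  have "inj L" by (rule injI) (metis ge vec_eq_iff antisym)
  hence "surj L" using linear_injective_imp_surjective[OF lin] by simp
  then obtain v where v: "L v = (\<chi> p. r (fst p) (snd p))" by (metis surjE)
  define q where "q = (\<lambda>x a. v$(x,a))"
  have "Tpol \<gamma> r P \<pi> q x a = q x a" for x a
  proof -
    have "(L v)$(x,a) = r x a" using v by simp
    thus ?thesis unfolding Tpol_def q_def L_def by simp
  qed
  thus ?thesis by blast
qed

lemma fp_unique:
  fixes P :: "'x::finite \<Rightarrow> 'a::finite \<Rightarrow> 'x \<Rightarrow> real"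
  assumes P: "stoch_kernel P" and pi: "stoch_policy \<pi>" and g: "0 \<le> \<gamma>" "\<gamma> < 1"
    and q1: "Tpol \<gamma> r P \<pi> q1 = q1" and q2: "Tpol \<gamma> r P \<pi> q2 = q2"
  shows "q1 = q2"
proof -
  have ge: "q1 x a \<le> q2 x a" if "Tpol \<gamma> r P \<pi> q1 = q1" "Tpol \<gamma> r P \<pi> q2 = q2" for q1 q2 x a
  proof -
    have "\<gamma> * Ppol P \<pi> (\<lambda>x a. q2 x a - q1 x a) x a \<le> q2 x a - q1 x a" for x a
    proof -
      have "Tpol \<gamma> r P \<pi> q1 x a = q1 x a" "Tpol \<gamma> r P \<pi> q2 x a = q2 x a" using that by simp_all
      thus ?thesis by (simp add: Tpol_def Ppol_diff algebra_simps)
    qed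
    from nonneg_lemma[OF P pi g, of "\<lambda>x a. q2 x a - q1 x a", OF this] show ?thesis by simp
  qed
  show ?thesis using ge[OF q1 q2] ge[OF q2 q1] by (intro ext antisym) auto
qed

lemma qpi_fix:
  fixes P :: "'x::finite \<Rightarrow> 'a::finite \<Rightarrow> 'x \<Rightarrow> real"
  assumes P: "stoch_kernel P" and pi: "stoch_policy \<pi>" and g: "0 \<le> \<gamma>" "\<gamma> < 1"
  shows "Tpol \<gamma> r P \<pi> (qpi \<gamma> r P \<pi>) = qpi \<gamma> r P \<pi>"
proof -
  obtain q where q: "Tpol \<gamma> r P \<pi> q = q" using fp_exists[OF P pi g] by blast
  have "\<exists>!q. Tpol \<gamma> r P \<pi> q = q" using q fp_unique[OF P pi g] by blast
  thus ?thesis unfolding qpi_def by (rule theI')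
qed

lemma qpi_eq:
  fixes P :: "'x::finite \<Rightarrow> 'a::finite \<Rightarrow> 'x \<Rightarrow> real"
  assumes P: "stoch_kernel P" and pi: "stoch_policy \<pi>" and g: "0 \<le> \<gamma>" "\<gamma> < 1"
  shows "qpi \<gamma> r P \<pi> x a = r x a + \<gamma> * Ppol P \<pi> (qpi \<gamma> r P \<pi>) x a"
  using qpi_fix[OF assms, of r] unfolding Tpol_def by (metis)

lemma Tpol_bound:
  fixes P :: "'x::finite \<Rightarrow> 'a::finite \<Rightarrow> 'x \<Rightarrow> real"
  assumes P: "stoch_kernel P" and pi: "stoch_policy \<pi>" and g: "0 \<le> \<gamma>" "\<gamma> < 1"
    and rew: "\<forall>x a. -1 \<le> r x a \<and> r x a \<le> 1"
    and qb: "\<And>x a. \<bar>q x a\<bar> \<le> Hor \<gamma>"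
  shows "\<bar>Tpol \<gamma> r P \<pi> q x a\<bar> \<le> Hor \<gamma>"
proof -
  have H: "1 + \<gamma> * Hor \<gamma> = Hor \<gamma>" using g by (simp add: Hor_def field_simps)
  have "Ppol P \<pi> q x a \<le> Ppol P \<pi> (\<lambda>x a. Hor \<gamma>) x a" by (rule Ppol_mono[OF P pi]) (use qb abs_le_D1 in blast)
  hence u: "Ppol P \<pi> q x a \<le> Hor \<gamma>" by (simp add: Ppol_const[OF P pi])
  have lb: "- Hor \<gamma> \<le> q x a" for x a using qb[of x a] by (simp add: abs_le_iff)
  have "Ppol P \<pi> (\<lambda>x a. - Hor \<gamma>) x a \<le> Ppol P \<pi> q x a" by (rule Ppol_mono[OF P pi]) (rule lb)
  hence l: "- Hor \<gamma> \<le> Ppol P \<pi> q x a" by (simp add: Ppol_const[OF P pi])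
  have "\<gamma> * Ppol P \<pi> q x a \<le> \<gamma> * Hor \<gamma>" using u g by (simp add: mult_left_mono)
  moreover have "\<gamma> * (- Hor \<gamma>) \<le> \<gamma> * Ppol P \<pi> q x a" using l g(1) by (rule mult_left_mono)
  moreover have "-1 \<le> r x a" "r x a \<le> 1" using rew by auto
  ultimately show ?thesis using H unfolding Tpol_def by (simp add: abs_le_iff)
qed

lemma qpi_bound:
  fixes P :: "'x::finite \<Rightarrow> 'a::finite \<Rightarrow> 'x \<Rightarrow> real"
  assumes P: "stoch_kernel P" and pi: "stoch_policy \<pi>" and g: "0 \<le> \<gamma>" "\<gamma> < 1"
    and rew: "\<forall>x a. -1 \<le> r x a \<and> r x a \<le> 1"
  shows "\<bar>qpi \<gamma> r P \<pi> x a\<bar> \<le> Hor \<gamma>"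
proof -
  let ?q = "qpi \<gamma> r P \<pi>"
  have H: "1 + \<gamma> * Hor \<gamma> = Hor \<gamma>" using g by (simp add: Hor_def field_simps)
  have e: "?q x a = r x a + \<gamma> * Ppol P \<pi> ?q x a" for x a by (rule qpi_eq[OF P pi g])
  have "\<gamma> * Ppol P \<pi> (\<lambda>x a. Hor \<gamma> - ?q x a) x a \<le> Hor \<gamma> - ?q x a" for x a
    using e[of x a] rew H by (simp add: Ppol_diff Ppol_const[OF P pi] algebra_simps) (smt (verit))
  from nonneg_lemma[OF P pi g, of "\<lambda>x a. Hor \<gamma> - ?q x a", OF this]
  have 1: "?q x a \<le> Hor \<gamma>" by simp
  have "\<gamma> * Ppol P \<pi> (\<lambda>x a. Hor \<gamma> + ?q x a) x a \<le> Hor \<gamma> + ?q x a" for x a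
    using e[of x a] rew H by (simp add: Ppol_add Ppol_const[OF P pi] algebra_simps) (smt (verit))
  have "0 \<le> Hor \<gamma> + ?q x a" by (rule nonneg_lemma[OF P pi g, of "\<lambda>x a. Hor \<gamma> + ?q x a", simplified]) fact
  hence 2: "- Hor \<gamma> \<le> ?q x a" by linarith
  show ?thesis using 1 2 by simp
qed



locale mdvi_loc =
  fixes \<gamma> \<alpha> :: real and K M :: nat
    and r :: "'x::finite \<Rightarrow> 'a::finite \<Rightarrow> real"
    and P :: "'x \<Rightarrow> 'a \<Rightarrow> 'x \<Rightarrow> real"
    and y :: "nat \<Rightarrow> nat \<Rightarrow> 'x \<Rightarrow> 'a \<Rightarrow> 'x"
    and pol :: "nat \<Rightarrow> 'x \<Rightarrow> 'a"
    and \<pi>s :: "'x \<Rightarrow> 'a \<Rightarrow> real"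
  assumes gamma: "0 \<le> \<gamma>" "\<gamma> < 1"
    and rew: "\<forall>x a. -1 \<le> r x a \<and> r x a \<le> 1"
    and kern: "stoch_kernel P"
    and alpha: "0 \<le> \<alpha>" "\<alpha> < 1"
    and greedy: "\<forall>j\<le>K. \<forall>x. mdvi_s \<alpha> M \<gamma> r y j x (pol j x) = Max (range (mdvi_s \<alpha> M \<gamma> r y j x))"
    and opt: "optimal_policy \<gamma> r P \<pi>s"
begin

abbreviation "s \<equiv> mdvi_s \<alpha> M \<gamma> r y"
abbreviation "w k \<equiv> fst (snd (mdvi_state \<alpha> M \<gamma> r y k))"
abbreviation "wp k \<equiv> snd (snd (mdvi_state \<alpha> M \<gamma> r y k))"
abbreviation "vv \<equiv> mdvi_v \<alpha> M \<gamma> r y"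
abbreviation "eps \<equiv> mdvi_eps \<alpha> M \<gamma> r P y"
abbreviation "E \<equiv> mdvi_E \<alpha> M \<gamma> r P y"
abbreviation "H \<equiv> Hor \<gamma>"
definition "A k = (\<Sum>j<k. \<alpha> ^ j)"

lemma pis: "stoch_policy \<pi>s" using opt unfolding optimal_policy_def by simp

lemma state_Suc:
  "s (Suc k) x a = r x a + \<gamma> / real M * (\<Sum>m<M. vv k (y k m x a)) + \<alpha> * s k x a"
  "w (Suc k) x = Max (range (s (Suc k) x))"
  "wp (Suc k) = w k"
proof -
  obtain s0 w0 wp0 where st: "mdvi_state \<alpha> M \<gamma> r y k = (s0, w0, wp0)" by (cases "mdvi_state \<alpha> M \<gamma> r y k") auto
  show "s (Suc k) x a = r x a + \<gamma> / real M * (\<Sum>m<M. vv k (y k m x a)) + \<alpha> * s k x a"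
    by (simp add: st mdvi_s_def mdvi_v_def Let_def)
  show "w (Suc k) x = Max (range (s (Suc k) x))"
    by (simp add: st mdvi_s_def mdvi_v_def Let_def)
  show "wp (Suc k) = w k"
    by (simp add: st mdvi_s_def mdvi_v_def Let_def)
qed

lemma state_0: "s 0 x a = 0" "w 0 x = 0" "wp 0 x = 0"
  by (simp_all add: mdvi_s_def)

lemma vv_eq: "vv k x = w k x - \<alpha> * wp k x" by (simp add: mdvi_v_def)

lemma s_Suc2: "s (Suc k) x a = r x a + \<gamma> * kern_app P (vv k) x a + eps (Suc k) x a + \<alpha> * s k x a"
  unfolding state_Suc mdvi_eps_def Phat_def by simp

lemma E_Suc: "E (Suc k) x a = eps (Suc k) x a + \<alpha> * E k x a"
proof -
  have "E (Suc k) x a = (\<Sum>j\<in>insert (Suc k) {1..k}. \<alpha> ^ (Suc k - j) * eps j x a)"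
    unfolding mdvi_E_def by (simp add: atLeastAtMostSuc_conv)
  also have "\<dots> = eps (Suc k) x a + (\<Sum>j\<in>{1..k}. \<alpha> * (\<alpha> ^ (k - j) * eps j x a))"
    by (simp add: Suc_diff_le mult.assoc)
  also have "\<dots> = eps (Suc k) x a + \<alpha> * E k x a"
    unfolding mdvi_E_def by (simp add: sum_distrib_left)
  finally show ?thesis .
qed

lemma E_0: "E 0 x a = 0" by (simp add: mdvi_E_def)

lemma A_Suc: "A (Suc k) = 1 + \<alpha> * A k" "A (Suc k) = A k + \<alpha> ^ k" "A 0 = 0"
proof -
  show 1: "A (Suc k) = 1 + \<alpha> * A k" unfolding A_def by (subst sum.lessThan_Suc_shift) (simp add: sum_distrib_left)
  show "A (Suc k) = A k + \<alpha> ^ k" unfolding A_def by simp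
  show "A 0 = 0" unfolding A_def by simp
qed

lemma s_formula: "s k x a = A k * r x a + \<gamma> * kern_app P (wp k) x a + E k x a"
proof (induction k arbitrary: x a)
  case 0
  show ?case by (simp add: state_0 E_0 A_Suc kern_app_def mdvi_s_def)
next
  case (Suc k)
  have "s (Suc k) x a = r x a + \<gamma> * kern_app P (\<lambda>x. w k x - \<alpha> * wp k x) x a + eps (Suc k) x a
     + \<alpha> * (A k * r x a + \<gamma> * kern_app P (wp k) x a + E k x a)"
    unfolding s_Suc2 Suc.IH vv_eq[abs_def] by simp
  also have "\<dots> = (1 + \<alpha> * A k) * r x a + \<gamma> * kern_app P (w k) x a + (eps (Suc k) x a + \<alpha> * E k x a)"
    by (simp add: kern_app_diff kern_app_cmult algebra_simps)
  finally show ?case unfolding state_Suc(3) E_Suc A_Suc(1) .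
qed

lemma w_greedy: "k \<le> K \<Longrightarrow> w k x = s k x (pol k x)"
proof (cases k)
  case 0 thus ?thesis by (simp add: state_0)
next
  case (Suc k')
  assume "k \<le> K"
  thus ?thesis using greedy Suc state_Suc(2) by simp
qed

lemma w_ge: "k \<le> K \<Longrightarrow> s k x a \<le> w k x"
proof (cases k)
  case 0 thus ?thesis by (simp add: state_0)
next
  case (Suc k')
  thus ?thesis using state_Suc(2)[of k' x] by simp
qed

lemma w_pol: "k \<le> K \<Longrightarrow> w k = pol_app (det_pol (pol k)) (s k)"
  by (rule ext) (simp add: pol_app_det w_greedy)

lemma w_ge_pol: "k \<le> K \<Longrightarrow> stoch_policy \<pi> \<Longrightarrow> pol_app \<pi> (s k) x \<le> w k x"
  by (rule pol_app_le_max) (auto intro: w_ge)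

end


context mdvi_loc begin

abbreviation "qs \<equiv> qpi \<gamma> r P \<pi>s"
abbreviation "vs \<equiv> vpi \<gamma> r P \<pi>s"

lemma H_nonneg: "0 \<le> H" using gamma by (simp add: Hor_def)

lemma qs_eq: "qs x a = r x a + \<gamma> * kern_app P vs x a"
  using qpi_eq[OF kern pis gamma, of r x a] by (simp add: Ppol_def vpi_def)

lemma vs_bound: "vs x \<le> H" "- H \<le> vs x"
proof -
  have b: "\<bar>qs x a\<bar> \<le> H" for a by (rule qpi_bound[OF kern pis gamma rew])
  show "vs x \<le> H" unfolding vpi_def by (rule pol_app_le_max[OF pis]) (use b in \<open>simp add: abs_le_iff\<close>)
  show "- H \<le> vs x" unfolding vpi_def by (rule pol_app_ge_min[OF pis]) (metis b abs_le_D2 minus_le_iff)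
qed

lemma kern_vs_bound: "kern_app P vs x a \<le> H"
proof -
  have "kern_app P vs x a \<le> kern_app P (\<lambda>x. H) x a" by (rule kern_app_mono[OF kern]) (rule vs_bound)
  thus ?thesis by (simp add: kern_app_const[OF kern])
qed

lemma A_gamma_Suc: "A_gamma \<gamma> \<alpha> (Suc k) = \<gamma> * A_gamma \<gamma> \<alpha> k + \<gamma> * \<alpha> ^ k"
proof -
  have "A_gamma \<gamma> \<alpha> (Suc k) = (\<Sum>j<k. \<gamma> ^ (Suc k - j) * \<alpha> ^ j) + \<gamma> * \<alpha> ^ k"
    unfolding A_gamma_def by simp
  also have "(\<Sum>j<k. \<gamma> ^ (Suc k - j) * \<alpha> ^ j) = \<gamma> * A_gamma \<gamma> \<alpha> k"
    unfolding A_gamma_def sum_distrib_left by (rule sum.cong) (auto simp: Suc_diff_le)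
  finally show ?thesis .
qed

lemma A_gamma_0: "A_gamma \<gamma> \<alpha> 0 = 0" by (simp add: A_gamma_def)

lemma Pstar_Suc: "Pstar_pow P \<pi>s (Suc j) q = Ppol P \<pi>s (Pstar_pow P \<pi>s j q)"
  by (simp add: Pstar_pow_def)

lemma part1: "k \<le> K \<Longrightarrow> A k * qs x a - s k x a
   \<le> A_gamma \<gamma> \<alpha> k * H - (\<Sum>j<k. \<gamma> ^ j * Pstar_pow P \<pi>s j (E (k - j)) x a)"
proof (induction k arbitrary: x a)
  case 0
  show ?case by (simp add: A_Suc(3) A_gamma_0 state_0)
next
  case (Suc k)
  hence kK: "k \<le> K" by simp
  define B where "B = (\<lambda>x a. A_gamma \<gamma> \<alpha> k * H - (\<Sum>j<k. \<gamma> ^ j * Pstar_pow P \<pi>s j (E (k - j)) x a))"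
  have h1: "A (Suc k) * qs x a - s (Suc k) x a
      = \<gamma> * (A k * kern_app P vs x a + \<alpha> ^ k * kern_app P vs x a - kern_app P (w k) x a) - E (Suc k) x a"
    unfolding s_formula[of "Suc k"] state_Suc(3) qs_eq A_Suc(2) by (simp add: algebra_simps)
  have h2: "kern_app P (pol_app \<pi>s (s k)) x a \<le> kern_app P (w k) x a"
    by (rule kern_app_mono[OF kern]) (rule w_ge_pol[OF kK pis])
  have h3: "A k * kern_app P vs x a - kern_app P (pol_app \<pi>s (s k)) x a
      = Ppol P \<pi>s (\<lambda>x a. A k * qs x a - s k x a) x a"
    by (simp add: Ppol_diff Ppol_cmult) (simp add: Ppol_def vpi_def)
  have h4: "Ppol P \<pi>s (\<lambda>x a. A k * qs x a - s k x a) x a \<le> Ppol P \<pi>s B x a"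
    by (rule Ppol_mono[OF kern pis]) (unfold B_def, rule Suc.IH[OF kK])
  have h5: "Ppol P \<pi>s B x a = A_gamma \<gamma> \<alpha> k * H - (\<Sum>j<k. \<gamma> ^ j * Pstar_pow P \<pi>s (Suc j) (E (k - j)) x a)"
    unfolding B_def by (simp add: Ppol_diff Ppol_const[OF kern pis] Ppol_sum Ppol_cmult Pstar_Suc)
  have h6: "\<alpha> ^ k * kern_app P vs x a \<le> \<alpha> ^ k * H"
    using kern_vs_bound alpha by (simp add: mult_left_mono)
  have "A (Suc k) * qs x a - s (Suc k) x a \<le>
     \<gamma> * (A_gamma \<gamma> \<alpha> k * H - (\<Sum>j<k. \<gamma> ^ j * Pstar_pow P \<pi>s (Suc j) (E (k - j)) x a) + \<alpha> ^ k * H) - E (Suc k) x a"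
    unfolding h1 using h2 h3 h4 h5 h6 gamma(1)
    by (intro diff_right_mono mult_left_mono) linarith+
  also have "\<dots> = A_gamma \<gamma> \<alpha> (Suc k) * H - (\<Sum>j<Suc k. \<gamma> ^ j * Pstar_pow P \<pi>s j (E (Suc k - j)) x a)"
    unfolding A_gamma_Suc sum.lessThan_Suc_shift[of _ k]
    by (simp add: sum_distrib_left algebra_simps Pstar_pow_def)
  finally show ?case .
qed

definition "Q i = (if i = 0 then qpi \<gamma> r P (det_pol (pol 0))
     else Tchain \<gamma> r P pol (i - 1) (qpi \<gamma> r P (det_pol (pol 0))))"

lemma Q_Suc: "Q (Suc i) x a = r x a + \<gamma> * Ppol P (det_pol (pol i)) (Q i) x a"
proof (cases i)
  case 0
  thus ?thesis unfolding Q_def using qpi_eq[OF kern det_pol_stoch gamma] by simp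
next
  case (Suc i')
  thus ?thesis unfolding Q_def by (simp add: Tpol_def)
qed

lemma Q_bound: "\<bar>Q i x a\<bar> \<le> H"
proof (induction i arbitrary: x a)
  case 0
  thus ?case unfolding Q_def using qpi_bound[OF kern det_pol_stoch gamma rew] by simp
next
  case (Suc i)
  have "\<bar>Tpol \<gamma> r P (det_pol (pol i)) (Q i) x a\<bar> \<le> H"
    by (rule Tpol_bound[OF kern det_pol_stoch gamma rew]) (rule Suc.IH)
  thus ?case by (simp add: Q_Suc Tpol_def)
qed

lemma Pchain_Suc': "j < i \<Longrightarrow> Pchain P pol (i - j) (Suc j) q = Ppol P (det_pol (pol i)) (Pchain P pol (i - j) j q)"
  by simp

lemma part2: "i \<le> K \<Longrightarrow> s i x a - A i * Q i x a
   \<le> (\<Sum>j<i. \<gamma> ^ j * Pchain P pol (i - j) j (E (i - j)) x a) + A_gamma \<gamma> \<alpha> i * H"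
proof (induction i arbitrary: x a)
  case 0
  show ?case by (simp add: A_Suc(3) A_gamma_0 state_0)
next
  case (Suc i)
  hence iK: "i \<le> K" by simp
  let ?pi = "det_pol (pol i)"
  have spi: "stoch_policy ?pi" by (rule det_pol_stoch)
  define B where "B = (\<lambda>x a. (\<Sum>j<i. \<gamma> ^ j * Pchain P pol (i - j) j (E (i - j)) x a) + A_gamma \<gamma> \<alpha> i * H)"
  have kw: "kern_app P (w i) x a = Ppol P ?pi (s i) x a"
    unfolding Ppol_def w_pol[OF iK] ..
  have h1: "s (Suc i) x a - A (Suc i) * Q (Suc i) x a
     = \<gamma> * (Ppol P ?pi (\<lambda>x a. s i x a - A i * Q i x a) x a) - \<gamma> * \<alpha> ^ i * Ppol P ?pi (Q i) x a + E (Suc i) x a"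
    unfolding s_formula[of "Suc i"] state_Suc(3) Q_Suc A_Suc(2) kw
    by (simp add: Ppol_diff Ppol_cmult algebra_simps)
  have h2: "Ppol P ?pi (\<lambda>x a. s i x a - A i * Q i x a) x a \<le> Ppol P ?pi B x a"
    by (rule Ppol_mono[OF kern spi]) (unfold B_def, rule Suc.IH[OF iK])
  have h3: "Ppol P ?pi B x a = (\<Sum>j<i. \<gamma> ^ j * Pchain P pol (i - j) (Suc j) (E (i - j)) x a) + A_gamma \<gamma> \<alpha> i * H"
    unfolding B_def by (simp add: Ppol_add Ppol_const[OF kern spi] Ppol_sum Ppol_cmult)
  have h4: "- Ppol P ?pi (Q i) x a \<le> H"
  proof -
    have "Ppol P ?pi (\<lambda>x a. - H) x a \<le> Ppol P ?pi (Q i) x a"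
      by (rule Ppol_mono[OF kern spi]) (metis Q_bound abs_le_D2 minus_le_iff)
    thus ?thesis by (simp add: Ppol_const[OF kern spi])
  qed
  have h5: "- (\<gamma> * \<alpha> ^ i * Ppol P ?pi (Q i) x a) \<le> \<gamma> * \<alpha> ^ i * H"
    using h4 gamma alpha by (metis mult_left_mono mult_minus_right zero_le_mult_iff zero_le_power)
  have "s (Suc i) x a - A (Suc i) * Q (Suc i) x a \<le>
     \<gamma> * ((\<Sum>j<i. \<gamma> ^ j * Pchain P pol (i - j) (Suc j) (E (i - j)) x a) + A_gamma \<gamma> \<alpha> i * H) + \<gamma> * \<alpha> ^ i * H + E (Suc i) x a"
    unfolding h1 using h5 mult_left_mono[OF h2[unfolded h3] gamma(1)] by linarith
  also have "\<dots> = (\<Sum>j<Suc i. \<gamma> ^ j * Pchain P pol (Suc i - j) j (E (Suc i - j)) x a) + A_gamma \<gamma> \<alpha> (Suc i) * H"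
    unfolding A_gamma_Suc sum.lessThan_Suc_shift[of _ i]
    by (simp add: sum_distrib_left algebra_simps)
  finally show ?case .
qed

end


context mdvi_loc begin

lemma qs_le_vs: "qs x a \<le> vs x"
proof -
  have "\<exists>b. \<forall>a. qs x a \<le> qs x b" for x
  proof -
    have fin: "finite (range (qs x))" by simp
    have "Max (range (qs x)) \<in> range (qs x)" by (rule Max_in[OF fin]) simp
    then obtain b where b: "Max (range (qs x)) = qs x b" by blast
    have "qs x a \<le> qs x b" for a using Max_ge[OF fin, of "qs x a"] b by simp
    thus ?thesis by blast
  qed
  hence "\<forall>x. \<exists>b. \<forall>a. qs x a \<le> qs x b" by blast
  then obtain g where g0: "\<forall>x. \<forall>a. qs x a \<le> qs x (g x)" using choice[of "\<lambda>x b. \<forall>a. qs x a \<le> qs x b"] by blast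
  hence g: "\<And>x a. qs x a \<le> qs x (g x)" by blast
  let ?pg = "det_pol g"
  let ?qg = "qpi \<gamma> r P ?pg"
  have pg: "stoch_policy ?pg" by (rule det_pol_stoch)
  have vsle: "vs y \<le> qs y (g y)" for y unfolding vpi_def by (rule pol_app_le_max[OF pis]) (rule g)
  have "\<gamma> * Ppol P ?pg (\<lambda>x a. ?qg x a - qs x a) x a \<le> ?qg x a - qs x a" for x a
  proof -
    have e1: "?qg x a = r x a + \<gamma> * Ppol P ?pg ?qg x a" by (rule qpi_eq[OF kern pg gamma])
    have "pol_app ?pg qs = (\<lambda>y. qs y (g y))" by (rule ext) (simp add: pol_app_det)
    hence "Ppol P ?pg qs x a = kern_app P (\<lambda>y. qs y (g y)) x a" by (simp add: Ppol_def)
    moreover have "kern_app P vs x a \<le> kern_app P (\<lambda>y. qs y (g y)) x a"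
      by (rule kern_app_mono[OF kern]) (rule vsle)
    ultimately have "\<gamma> * kern_app P vs x a \<le> \<gamma> * Ppol P ?pg qs x a" using gamma(1) by (simp add: mult_left_mono)
    thus ?thesis using e1 qs_eq[of x a] by (simp add: Ppol_diff algebra_simps)
  qed
  from nonneg_lemma[OF kern pg gamma, OF this]
  have qq: "qs x a \<le> ?qg x a" for x a by simp
  have "vpi \<gamma> r P ?pg x = ?qg x (g x)" by (simp add: vpi_def pol_app_det)
  moreover have "vpi \<gamma> r P ?pg x \<le> vs x" using opt pg unfolding optimal_policy_def by blast
  ultimately show ?thesis using g[of x a] qq[of x "g x"] by linarith
qed

lemma Ppol_qs_le: "stoch_policy \<pi> \<Longrightarrow> Ppol P \<pi> qs x a \<le> kern_app P vs x a"
  unfolding Ppol_def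
  by (rule kern_app_mono[OF kern], rule pol_app_le_max) (auto intro: qs_le_vs)

lemma Q_le: "Q i x a \<le> qs x a"
proof (induction i arbitrary: x a)
  case 0
  let ?p = "det_pol (pol 0)"
  have sp: "stoch_policy ?p" by (rule det_pol_stoch)
  have "\<gamma> * Ppol P ?p (\<lambda>x a. qs x a - Q 0 x a) x a \<le> qs x a - Q 0 x a" for x a
  proof -
    have e1: "Q 0 x a = r x a + \<gamma> * Ppol P ?p (Q 0) x a"
      unfolding Q_def using qpi_eq[OF kern sp gamma] by simp
    have "\<gamma> * Ppol P ?p qs x a \<le> \<gamma> * kern_app P vs x a"
      using Ppol_qs_le[OF sp] gamma(1) by (simp add: mult_left_mono)
    thus ?thesis using e1 qs_eq[of x a] by (simp add: Ppol_diff algebra_simps)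
  qed
  from nonneg_lemma[OF kern sp gamma, OF this]
  show ?case by simp
next
  case (Suc i)
  let ?p = "det_pol (pol i)"
  have sp: "stoch_policy ?p" by (rule det_pol_stoch)
  have "Ppol P ?p (Q i) x a \<le> Ppol P ?p qs x a" by (rule Ppol_mono[OF kern sp]) (rule Suc.IH)
  also have "\<dots> \<le> kern_app P vs x a" by (rule Ppol_qs_le[OF sp])
  finally have "\<gamma> * Ppol P ?p (Q i) x a \<le> \<gamma> * kern_app P vs x a" using gamma(1) by (simp add: mult_left_mono)
  thus ?case by (simp add: Q_Suc qs_eq)
qed

lemma final:
  assumes k: "1 \<le> k" "k \<le> K"
  shows "0 \<le> vs x - v_nonstat \<gamma> r P pol k x
     \<and> vs x - v_nonstat \<gamma> r P pol k x \<le> Gamma_bound \<alpha> M \<gamma> r P y pol \<pi>s k x"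
proof -
  let ?pk = "pol k x"
  have vn: "v_nonstat \<gamma> r P pol k x = Q k x ?pk"
    using k by (simp add: v_nonstat_def pol_app_det Q_def)
  have low: "0 \<le> vs x - Q k x ?pk" using Q_le[of k x ?pk] qs_le_vs[of x ?pk] by simp
  define X where "X = (\<Sum>j<k. \<gamma> ^ j * Pchain P pol (k - j) j (E (k - j)) x ?pk)"
  define Y where "Y = (\<Sum>j<k. \<gamma> ^ j * pol_app \<pi>s (Pstar_pow P \<pi>s j (E (k - j))) x)"
  let ?Ag = "A_gamma \<gamma> \<alpha> k"
  have u1: "A k * vs x - s k x ?pk \<le> ?Ag * H - Y"
  proof -
    have "pol_app \<pi>s (s k) x \<le> s k x ?pk" using w_ge_pol[OF k(2) pis] w_greedy[OF k(2)] by simp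
    moreover have "A k * vs x - pol_app \<pi>s (s k) x = pol_app \<pi>s (\<lambda>x a. A k * qs x a - s k x a) x"
      by (simp add: pol_app_diff pol_app_cmult vpi_def)
    moreover have "pol_app \<pi>s (\<lambda>x a. A k * qs x a - s k x a) x
        \<le> pol_app \<pi>s (\<lambda>x a. ?Ag * H - (\<Sum>j<k. \<gamma> ^ j * Pstar_pow P \<pi>s j (E (k - j)) x a)) x"
      by (rule pol_app_mono[OF pis]) (rule part1[OF k(2)])
    moreover have "pol_app \<pi>s (\<lambda>x a. ?Ag * H - (\<Sum>j<k. \<gamma> ^ j * Pstar_pow P \<pi>s j (E (k - j)) x a)) x
        = ?Ag * H - Y"
      unfolding Y_def by (simp add: pol_app_diff pol_app_const[OF pis] pol_app_sum pol_app_cmult)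
    ultimately show ?thesis by linarith
  qed
  have u2: "s k x ?pk - A k * Q k x ?pk \<le> X + ?Ag * H"
    unfolding X_def by (rule part2[OF k(2)])
  have u3: "A k * (vs x - Q k x ?pk) \<le> 2 * ?Ag * H + X - Y"
    using u1 u2 by (simp add: algebra_simps)
  have oa: "(1 - \<alpha>) * A k = 1 - \<alpha> ^ k" unfolding A_def by (simp add: one_diff_power_eq)
  have one: "\<alpha> ^ k + (1 - \<alpha>) * A k = 1" using oa by simp
  have split: "vs x - Q k x ?pk = \<alpha> ^ k * (vs x - Q k x ?pk) + (1 - \<alpha>) * (A k * (vs x - Q k x ?pk))"
  proof -
    have "vs x - Q k x ?pk = (\<alpha> ^ k + (1 - \<alpha>) * A k) * (vs x - Q k x ?pk)" unfolding one by simp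
    also have "\<dots> = \<alpha> ^ k * (vs x - Q k x ?pk) + (1 - \<alpha>) * (A k * (vs x - Q k x ?pk))"
      by (simp only: distrib_right mult.assoc)
    finally show ?thesis .
  qed
  have t1: "\<alpha> ^ k * (vs x - Q k x ?pk) \<le> \<alpha> ^ k * (2 * H)"
  proof (rule mult_left_mono)
    show "vs x - Q k x ?pk \<le> 2 * H" using vs_bound(1)[of x] Q_bound[of k x ?pk] by (simp add: abs_le_iff)
  qed (use alpha in simp)
  have t2: "(1 - \<alpha>) * (A k * (vs x - Q k x ?pk)) \<le> (1 - \<alpha>) * (2 * ?Ag * H + X - Y)"
    by (rule mult_left_mono[OF u3]) (use alpha in simp)
  have sumeq: "(\<Sum>j<k. \<gamma> ^ j * (pol_app (det_pol (pol k)) (Pji P pol (k - j) (k - 1) (E (k - j))) x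
        - pol_app \<pi>s (Pstar_pow P \<pi>s j (E (k - j))) x)) = X - Y"
  proof -
    have "(\<Sum>j<k. \<gamma> ^ j * (pol_app (det_pol (pol k)) (Pji P pol (k - j) (k - 1) (E (k - j))) x
        - pol_app \<pi>s (Pstar_pow P \<pi>s j (E (k - j))) x))
      = (\<Sum>j<k. \<gamma> ^ j * Pchain P pol (k - j) j (E (k - j)) x ?pk
        - \<gamma> ^ j * pol_app \<pi>s (Pstar_pow P \<pi>s j (E (k - j))) x)"
    proof (rule sum.cong)
      fix j assume "j \<in> {..<k}"
      hence "k - 1 + 1 - (k - j) = j" using k by auto
      thus "\<gamma> ^ j * (pol_app (det_pol (pol k)) (Pji P pol (k - j) (k - 1) (E (k - j))) x
        - pol_app \<pi>s (Pstar_pow P \<pi>s j (E (k - j))) x)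
       = \<gamma> ^ j * Pchain P pol (k - j) j (E (k - j)) x ?pk
        - \<gamma> ^ j * pol_app \<pi>s (Pstar_pow P \<pi>s j (E (k - j))) x"
        by (simp add: Pji_def pol_app_det algebra_simps)
    qed simp
    thus ?thesis unfolding X_def Y_def by (simp add: sum_subtractf)
  qed
  have G: "Gamma_bound \<alpha> M \<gamma> r P y pol \<pi>s k x = (1 - \<alpha>) * (X - Y) + 2 * H * (\<alpha> ^ k + ?Ag * (1 - \<alpha>))"
    unfolding Gamma_bound_def sumeq by (simp add: A_inf_def)
  have "vs x - Q k x ?pk \<le> \<alpha> ^ k * (2 * H) + (1 - \<alpha>) * (2 * ?Ag * H + X - Y)"
    using split t1 t2 by linarith
  also have "\<dots> = Gamma_bound \<alpha> M \<gamma> r P y pol \<pi>s k x" unfolding G by (simp add: algebra_simps)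
  finally show ?thesis using low vn by simp
qed

end

theorem lemma1:
  fixes \<gamma> \<alpha> :: real and K M :: nat
    and r :: "'x::finite \<Rightarrow> 'a::finite \<Rightarrow> real"
    and P :: "'x \<Rightarrow> 'a \<Rightarrow> 'x \<Rightarrow> real"
    and y :: "nat \<Rightarrow> nat \<Rightarrow> 'x \<Rightarrow> 'a \<Rightarrow> 'x"
    and pol :: "nat \<Rightarrow> 'x \<Rightarrow> 'a"
    and \<pi>s :: "'x \<Rightarrow> 'a \<Rightarrow> real"
    and k :: nat
  assumes gamma: "0 \<le> \<gamma>" "\<gamma> < 1"
    and rew: "\<forall>x a. -1 \<le> r x a \<and> r x a \<le> 1"
    and kern: "stoch_kernel P"
    and alpha: "0 \<le> \<alpha>" "\<alpha> < 1"
    and KM: "0 < K" "0 < M"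
    and samples: "\<forall>j m x a. 0 < P x a (y j m x a)"
    and greedy: "\<forall>j\<le>K. \<forall>x. mdvi_s \<alpha> M \<gamma> r y j x (pol j x) = Max (range (mdvi_s \<alpha> M \<gamma> r y j x))"
    and opt: "optimal_policy \<gamma> r P \<pi>s"
    and k: "1 \<le> k" "k \<le> K"
  shows "\<forall>x. 0 \<le> vpi \<gamma> r P \<pi>s x - v_nonstat \<gamma> r P pol k x
           \<and> vpi \<gamma> r P \<pi>s x - v_nonstat \<gamma> r P pol k x \<le> Gamma_bound \<alpha> M \<gamma> r P y pol \<pi>s k x"
proof -
  interpret mdvi_loc \<gamma> \<alpha> K M r P y pol \<pi>s
    using gamma rew kern alpha greedy opt by unfold_locales auto
  show ?thesis using final[OF k] by blast
qed

end
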